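(* Let $k$ be a positive integer, $S=\{6k+1,6k+2,9k+3\}$ and $G=\langle S\rangle$. For $i\in\mathbb{N}^*=\mathbb{N}\setminus\{0\}$ let $A_{i,k}=[(6k+1)i,\,(6k+1)i+i]$ and $B_{i,k}=[(6k+1)i+(3k+2),\,(6k+1)i+(3k+2)+i-1]$, and let $H_{2,k}=\{0\}\cup\bigcup_{i\in\mathbb{N}^*}(A_{i,k}\cup B_{i,k})$. Then: (1) $H_{2,k}$ is a submonoid of $(\mathbb{N},+,0)$ containing $S$; (2) $A_{i,k}<B_{i,k}$ for every $i\in[1,3k+1]$; (3) $B_{i,k}\le A_{i+1,k}$ for every $i\in[1,3k]$; (4) $[(6k+1)(3k)+(3k+2),\infty[\ \subseteq H_{2,k}$; (5) $G=H_{2,k}$; (6) $H_{2,k}$ is a $3$-permutation numerical semigroup.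
   Context: $\mathbb{N}=\{0,1,2,\dots\}$. A numerical semigroup is a submonoid $G$ of $(\mathbb{N},+,0)$ with $\mathbb{N}\setminus G$ finite; $\langle S\rangle$ is the submonoid generated by $S$. Writing the elements of a numerical semigroup $G$ as $0=g_0<g_1<g_2<\cdots$, $G$ is an $n$-permutation numerical semigroup if $G=\langle\{g_1,\dots,g_n\}\rangle$ and for every $k\in\mathbb{N}$ the tuple $(g_{kn+1}\bmod n,\dots,g_{kn+n}\bmod n)$ contains exactly one representative of each residue class mod $n$. Notation: $[a,b]=\{x\in\mathbb{N}:a\le x\le b\}$, $[a,\infty[=\{x\in\mathbb{N}:x\ge a\}$. For nonempty $A,B\subseteq\mathbb{N}$, $A<B$ (resp. $A\le B$) means $x<y$ (resp. $x\le y$) for all $x\in A$, $y\in B$. *)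

theory Defs
  imports Main "HOL-Library.Infinite_Set"
begin

definition submonoid_nat :: "nat set \<Rightarrow> bool" where
  "submonoid_nat M \<longleftrightarrow> 0 \<in> M \<and> (\<forall>x\<in>M. \<forall>y\<in>M. x + y \<in> M)"

definition gen_monoid :: "nat set \<Rightarrow> nat set" where
  "gen_monoid S = \<Inter> {M. submonoid_nat M \<and> S \<subseteq> M}"

definition numerical_semigroup :: "nat set \<Rightarrow> bool" where
  "numerical_semigroup G \<longleftrightarrow> submonoid_nat G \<and> finite (UNIV - G)"

text \<open>g_j = enumerate G j is the j-th element (from 0) of G in increasing order.\<close>
definition perm_numerical_semigroup :: "nat \<Rightarrow> nat set \<Rightarrow> bool" where
  "perm_numerical_semigroup n G \<longleftrightarrow>
     numerical_semigroup G \<and>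
     G = gen_monoid ((\<lambda>j. enumerate G j) ` {1..n}) \<and>
     (\<forall>k. bij_betw (\<lambda>j. enumerate G (k * n + j) mod n) {1..n} {..<n})"

definition A_set :: "nat \<Rightarrow> nat \<Rightarrow> nat set" where
  "A_set i k = {(6*k+1)*i .. (6*k+1)*i + i}"

definition B_set :: "nat \<Rightarrow> nat \<Rightarrow> nat set" where
  "B_set i k = {(6*k+1)*i + (3*k+2) .. (6*k+1)*i + (3*k+2) + i - 1}"

definition H2 :: "nat \<Rightarrow> nat set" where
  "H2 k = {0} \<union> (\<Union>i\<in>{1..}. A_set i k \<union> B_set i k)"

end

theory Submission
  imports Defs
begin

lemma memB: "i \<ge> 1 \<Longrightarrow> y \<in> B_set i k \<longleftrightarrow> ((6*k+1)*i+(3*k+2) \<le> y \<and> y < (6*k+1)*i+(3*k+2)+i)"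
    unfolding B_set_def by auto

lemma memH: "y \<in> H2 k \<longleftrightarrow> y = 0 \<or> (\<exists>i\<ge>1. ((6*k+1)*i \<le> y \<and> y \<le> (6*k+1)*i+i) \<or>
   ((6*k+1)*i+(3*k+2) \<le> y \<and> y < (6*k+1)*i+(3*k+2)+i))"
proof -
  have "y \<in> H2 k \<longleftrightarrow> y = 0 \<or> (\<exists>i\<ge>1. y \<in> A_set i k \<or> y \<in> B_set i k)"
    unfolding H2_def by auto
  also have "\<dots> \<longleftrightarrow> y = 0 \<or> (\<exists>i\<ge>1. ((6*k+1)*i \<le> y \<and> y \<le> (6*k+1)*i+i) \<or>
   ((6*k+1)*i+(3*k+2) \<le> y \<and> y < (6*k+1)*i+(3*k+2)+i))" unfolding A_set_def
    by (simp add: memB cong: conj_cong)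
  finally show ?thesis .
qed

lemma loc:
  assumes "y \<in> H2 k" "(6*k+1)*i \<le> y" "y < (6*k+1)*(i+1)" "1 \<le> i" "i \<le> 3*k"
  shows "y \<le> (6*k+1)*i+i \<or> ((6*k+1)*i+(3*k+2) \<le> y \<and> y < (6*k+1)*i+(3*k+2)+i)"
proof -
  define a where "a = 6*k+1"
  have A: "a*i \<le> y" "y < a*i + a" using assms(2,3) unfolding a_def by simp_all
  have "1 \<le> a*i" using assms(4) unfolding a_def by simp
  then have y0: "y \<noteq> 0" using A by linarith
  then obtain j where j: "j \<ge> 1" and jj: "(a*j \<le> y \<and> y \<le> a*j+j) \<or>
   (a*j+(3*k+2) \<le> y \<and> y < a*j+(3*k+2)+j)" using assms(1) unfolding memH a_def by blast
  consider "j < i" | "j = i" | "j > i" by linarith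
  then show ?thesis
  proof cases
    case 1
    then have "a*(j+1) \<le> a*i" by (intro mult_le_mono2) simp
    moreover have "a*(j+1) = a*j + a" by simp
    moreover have "y < a*j+(3*k+2)+j" using jj by linarith
    ultimately show ?thesis using A 1 assms(5) a_def by linarith
  next
    case 2 then show ?thesis using jj unfolding a_def by auto
  next
    case 3
    then have "a*(i+1) \<le> a*j" by (intro mult_le_mono2) simp
    moreover have "a*(i+1) = a*i + a" by simp
    moreover have "a*j \<le> y" using jj by linarith
    ultimately show ?thesis using A by linarith
  qed
qed

lemma tail4:
  assumes k: "0 < k" and y: "(6*k+1)*(3*k)+(3*k+2) \<le> y"
  shows "y \<in> H2 k"
proof -
  define a where "a = 6*k+1"
  define i where "i = y div a"
  define r where "r = y mod a"
  have yr: "y = a*i + r" unfolding i_def r_def by simp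
  have ra: "r < a" unfolding r_def a_def by simp
  have y': "a*(3*k)+(3*k+2) \<le> y" using y unfolding a_def .
  have i3: "i \<ge> 3*k"
  proof (rule ccontr)
    assume "\<not> ?thesis"
    then have "i + 1 \<le> 3*k" by simp
    then have "a*(i+1) \<le> a*(3*k)" by (rule mult_le_mono2)
    moreover have "a*(i+1) = a*i + a" by simp
    ultimately show False using yr ra y' by linarith
  qed
  have i1: "i \<ge> 1" using i3 k by simp
  have d: "(a*i \<le> y \<and> y \<le> a*i+i) \<or> (a*i+(3*k+2) \<le> y \<and> y < a*i+(3*k+2)+i)"
  proof (cases "r \<le> i")
    case True then show ?thesis using yr by simp
  next
    case False
    show ?thesis
    proof (cases "r = 3*k+1")
      case True
      have "i \<noteq> 3*k"
      proof
        assume "i = 3*k"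
        with yr True have "y = a*(3*k) + (3*k+1)" by simp
        with y' show False by linarith
      qed
      then show ?thesis using False True i3 by simp
    next
      case False2: False
      have "3*k+2 \<le> r" using False False2 i3 by linarith
      moreover have "r < 3*k+2+i" using ra a_def i3 by linarith
      ultimately show ?thesis using yr by linarith
    qed
  qed
  show ?thesis unfolding memH apply (rule disjI2) apply (rule exI[of _ i])
    using i1 d unfolding a_def by blast
qed

lemma H2_infinite: "0 < k \<Longrightarrow> infinite (H2 k)"
proof -
  assume k: "0 < k"
  have "{(6*k+1)*(3*k)+(3*k+2)..} \<subseteq> H2 k" using tail4[OF k] by blast
  then show ?thesis using infinite_Ici infinite_super by blast
qed

lemma enum_next:
  assumes "infinite S" "enumerate S j = x" "y \<in> S" "x < y" "\<forall>z. x < z \<and> z < y \<longrightarrow> z \<notin> S"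
  shows "enumerate S (Suc j) = y"
  unfolding enumerate_Suc''[OF assms(1)] using assms
  by (intro Least_equality) (auto simp: not_less[symmetric])

lemma enum_next1:
  assumes "infinite (S::nat set)" "enumerate S j = x" "x + 1 \<in> S"
  shows "enumerate S (Suc j) = x + 1"
  by (rule enum_next[OF assms(1,2,3)]) auto

context fixes k a :: nat assumes k: "0 < k" and a: "a = 6*k+1" begin

abbreviation "E \<equiv> enumerate (H2 k)"

lemma inf: "infinite (H2 k)" using H2_infinite k by blast

lemmas memHa = memH[of _ k, folded a]
lemmas loca = loc[of _ k, folded a]

lemma E0: "E 0 = 0"
  unfolding enumerate_0 by (rule Least_equality) (auto simp: memH)

lemma inA: "1 \<le> i \<Longrightarrow> e \<le> i \<Longrightarrow> a*i + e \<in> H2 k"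
  unfolding memHa by auto

lemma inB: "1 \<le> i \<Longrightarrow> d < i \<Longrightarrow> a*i + (3*k+2) + d \<in> H2 k"
  unfolding memHa apply (rule disjI2) apply (rule exI[of _ i]) by auto

lemma E1: "E 1 = a"
proof -
  have "E (Suc 0) = a"
  proof (rule enum_next[OF inf E0])
    show "a \<in> H2 k" using inA[of 1 0] by simp
    show "0 < a" using a by simp
    show "\<forall>z. 0 < z \<and> z < a \<longrightarrow> z \<notin> H2 k"
    proof (intro allI impI)
      fix z assume z: "0 < z \<and> z < a"
      show "z \<notin> H2 k"
      proof
        assume "z \<in> H2 k"
        then obtain j where "j \<ge> 1" and jd: "(a*j \<le> z \<and> z \<le> a*j+j) \<or>
   (a*j+(3*k+2) \<le> z \<and> z < a*j+(3*k+2)+j)" using z unfolding memHa by blast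
        from jd have "a*j \<le> z" by linarith
        moreover have "a*1 \<le> a*j" using \<open>j\<ge>1\<close> by (rule mult_le_mono2)
        ultimately show False using z by simp
      qed
    qed
  qed
  then show ?thesis by simp
qed

lemma block:
  assumes i: "1 \<le> i" "i \<le> 3*k" and st: "E (i^2) = a*i"
  shows "(\<forall>e\<le>i. E (i^2+e) = a*i + e) \<and> (\<forall>d<i. E (i^2+i+1+d) = a*i+(3*k+2)+d)"
proof -
  have A: "\<forall>e\<le>i. E (i^2+e) = a*i + e"
  proof (intro allI impI)
    fix e assume "e \<le> i" then show "E (i^2+e) = a*i + e"
    proof (induction e)
      case 0 then show ?case using st by simp
    next
      case (Suc e)
      have ih: "E (i^2+e) = a*i + e" using Suc by simp
      have "E (Suc (i^2+e)) = a*i + e + 1"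
      proof (rule enum_next1[OF inf ih])
        show "a*i + e + 1 \<in> H2 k" using inA[OF i(1), of "Suc e"] Suc.prems by simp
      qed
      then show ?case by simp
    qed
  qed
  have B: "\<forall>d<i. E (i^2+i+1+d) = a*i+(3*k+2)+d"
  proof (intro allI impI)
    fix d assume "d < i" then show "E (i^2+i+1+d) = a*i+(3*k+2)+d"
    proof (induction d)
      case 0
      have "E (Suc (i^2+i)) = a*i+(3*k+2)"
      proof (rule enum_next[OF inf])
        show "E (i^2+i) = a*i + i" using A by simp
        show "a*i+(3*k+2) \<in> H2 k" using inB[OF i(1), of 0] 0 by simp
        show "a*i + i < a*i+(3*k+2)" using i by simp
        show "\<forall>z. a*i + i < z \<and> z < a*i+(3*k+2) \<longrightarrow> z \<notin> H2 k"
        proof (intro allI impI notI)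
          fix z assume z: "a*i + i < z \<and> z < a*i+(3*k+2)" and zH: "z \<in> H2 k"
          have "a*(i+1) = a*i + a" by simp
          then have z2: "z < a*(i+1)" using z k a by linarith
          have z1: "a*i \<le> z" using z by linarith
          show False using loca[OF zH z1 z2 i] z by linarith
        qed
      qed
      then show ?case by simp
    next
      case (Suc d)
      have ih: "E (i^2+i+1+d) = a*i+(3*k+2)+d" using Suc by simp
      have "E (Suc (i^2+i+1+d)) = a*i+(3*k+2)+d+1"
      proof (rule enum_next1[OF inf ih])
        show "a*i+(3*k+2)+d+1 \<in> H2 k" using inB[OF i(1), of "Suc d"] Suc.prems by simp
      qed
      then show ?case by simp
    qed
  qed
  from A B show ?thesis by blast
qed

lemma start: "1 \<le> i \<Longrightarrow> i \<le> 3*k \<Longrightarrow> E (i^2) = a*i"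
proof (induction i)
  case 0 then show ?case by simp
next
  case (Suc i)
  show ?case
  proof (cases "i = 0")
    case True then show ?thesis using E1 by simp
  next
    case False
    then have i: "1 \<le> i" "i \<le> 3*k" using Suc by auto
    have i3: "i < 3*k" using Suc.prems by simp
    note bl = block[OF i Suc.IH[OF i]]
    have "i - 1 < i" using i by simp
    with bl have last: "E (i^2+i+1+(i-1)) = a*i+(3*k+2)+(i-1)" by blast
    have idx: "i^2+i+1+(i-1) = i^2 + 2*i" using i by simp
    have lv: "a*i+(3*k+2)+(i-1) = a*i+3*k+1+i" using i by simp
    have ai: "a*(i+1) = a*i + a" by simp
    have "E (Suc (i^2+2*i)) = a*(i+1)"
    proof (rule enum_next[OF inf])
      show "E (i^2+2*i) = a*i+3*k+1+i" using last by (simp only: idx lv)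
      show "a*(i+1) \<in> H2 k" using inA[of "i+1" 0] by simp
      show "a*i+3*k+1+i < a*(i+1)" using ai i3 a by linarith
      show "\<forall>z. a*i+3*k+1+i < z \<and> z < a*(i+1) \<longrightarrow> z \<notin> H2 k"
      proof (intro allI impI notI)
        fix z assume z: "a*i+3*k+1+i < z \<and> z < a*(i+1)" and zH: "z \<in> H2 k"
        have z1: "a*i \<le> z" using z by linarith
        have z2: "z < a*(i+1)" using z by linarith
        from loca[OF zH z1 z2 i] z show False by linarith
      qed
    qed
    moreover have "Suc (i^2+2*i) = (Suc i)^2" by (simp add: power2_eq_square)
    ultimately show ?thesis by simp
  qed
qed

lemma tailE: "E ((3*k)^2 + 3*k + 1 + t) = a*(3*k)+(3*k+2) + t"
proof (induction t)
  case 0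
  have "1 \<le> 3*k" using k by simp
  have "0 < 3*k" using k by simp
  with block[OF \<open>1 \<le> 3*k\<close> order_refl start[OF \<open>1 \<le> 3*k\<close> order_refl]]
  have "E ((3*k)^2+3*k+1+0) = a*(3*k)+(3*k+2)+0" by blast
  then show ?case by simp
next
  case (Suc t)
  have "E (Suc ((3*k)^2 + 3*k + 1 + t)) = a*(3*k)+(3*k+2) + t + 1"
  proof (rule enum_next1[OF inf Suc])
    show "a*(3*k)+(3*k+2) + t + 1 \<in> H2 k" by (rule tail4[OF k]) (simp add: a)
  qed
  then show ?case by simp
qed

end

lemma sq_mod3: "(i::nat)^2 mod 3 = (i mod 3)^2 mod 3"
  by (simp add: power_mod)
lemma i_cases3: "(i::nat) mod 3 = 0 \<or> i mod 3 = 1 \<or> i mod 3 = 2" by presburger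

lemma sqm: "(i::nat) mod 3 = r \<Longrightarrow> i^2 mod 3 = r^2 mod 3"
proof -
  assume "i mod 3 = r"
  have "i^2 mod 3 = (i mod 3)^2 mod 3" by (rule sq_mod3)
  also have "\<dots> = r^2 mod 3" using \<open>i mod 3 = r\<close> by simp
  finally show ?thesis .
qed

lemma M1:
  assumes "((i::nat)^2+i) mod 3 \<noteq> 0"
  shows "((6*k+1)*i + (3*k+2)) mod 3 = ((6*k+1)*i+i+1) mod 3"
proof -
  have h0: "(i^2+i) mod 3 = (i^2 mod 3 + i mod 3) mod 3" by (simp add: mod_add_eq)
  have i1: "i mod 3 = 1"
  proof -
    consider "i mod 3 = 0" | "i mod 3 = 1" | "i mod 3 = 2" using i_cases3[of i] by (elim disjE) auto
    then show ?thesis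
    proof cases
      case 1 then have "i^2 mod 3 = 0" using sqm by fastforce
      with h0 1 assms show ?thesis by simp
    next
      case 2 then show ?thesis .
    next
      case 3 then have "i^2 mod 3 = 1" using sqm by fastforce
      with h0 3 assms show ?thesis by simp
    qed
  qed
  have e: "(6*k+1)*i = 3*(2*k*i) + i" by simp
  have "\<forall>m. (3*m + i + (3*k+2)) mod 3 = (3*m + i+i+1) mod 3" using i1 by presburger
  then show ?thesis unfolding e by (rule spec)
qed

lemma M2:
  assumes "((i::nat)^2+2*i) mod 3 \<noteq> 0"
  shows "((6*k+1)*(i+1)) mod 3 = ((6*k+1)*i+3*k+2+i) mod 3"
proof -
  have h0: "(i^2+2*i) mod 3 = (i^2 mod 3 + (2*i) mod 3) mod 3" by (simp add: mod_add_eq)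
  have i1: "i mod 3 = 2"
  proof -
    consider "i mod 3 = 0" | "i mod 3 = 1" | "i mod 3 = 2" using i_cases3[of i] by (elim disjE) auto
    then show ?thesis
    proof cases
      case 1 then have "i^2 mod 3 = 0" using sqm by fastforce
      moreover have "(2*i) mod 3 = 0" using 1 by presburger
      ultimately show ?thesis using h0 assms by simp
    next
      case 2 then have "i^2 mod 3 = 1" using sqm by fastforce
      moreover have "(2*i) mod 3 = 2" using 2 by presburger
      ultimately show ?thesis using h0 assms by simp
    next
      case 3 then show ?thesis .
    qed
  qed
  have e: "(6*k+1)*(i+1) = 3*(2*k*i) + i + 6*k+1" by (simp add: algebra_simps)
  have e2: "(6*k+1)*i = 3*(2*k*i) + i" by simp
  have "\<forall>m. (3*m + i + 6*k+1) mod 3 = (3*m + i+3*k+2+i) mod 3" using i1 by presburger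
  then show ?thesis unfolding e e2 by (rule spec)
qed
lemma sqrt_ex: "1 \<le> (j::nat) \<Longrightarrow> \<exists>i\<ge>1. i^2 \<le> j \<and> j < (Suc i)^2"
proof (induction j)
  case 0 then show ?case by simp
next
  case (Suc j)
  show ?case
  proof (cases "j = 0")
    case True then show ?thesis by (intro exI[of _ 1]) (simp add: power2_eq_square)
  next
    case False
    then obtain i where i: "i \<ge> 1" "i^2 \<le> j" "j < (Suc i)^2" using Suc by auto
    show ?thesis
    proof (cases "Suc j < (Suc i)^2")
      case True then show ?thesis using i by auto
    next
      case False
      then have "Suc j = (Suc i)^2" using i by simp
      moreover have "(Suc i)^2 < (Suc (Suc i))^2" by (simp add: power2_eq_square)
      ultimately show ?thesis by (intro exI[of _ "Suc i"]) simp
    qed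
  qed
qed

context fixes k a :: nat assumes k: "0 < k" and a: "a = 6*k+1" begin

lemma stepmod:
  assumes jm: "j mod 3 \<noteq> 0"
  shows "E k (Suc j) mod 3 = (E k j + 1) mod 3"
proof (cases "(3*k)^2+3*k+1 \<le> j")
  case True
  then obtain t where t: "j = (3*k)^2+3*k+1+t" using le_Suc_ex by blast
  have "E k j = a*(3*k)+(3*k+2) + t" unfolding t by (rule tailE[OF k a])
  moreover have "E k (Suc j) = a*(3*k)+(3*k+2) + Suc t"
    unfolding t using tailE[OF k a, of "Suc t"] by simp
  ultimately show ?thesis by simp
next
  case False
  have j1: "1 \<le> j" using jm by (cases j) auto
  obtain i where i1: "i \<ge> 1" and ij: "i^2 \<le> j" and ji: "j < (Suc i)^2" using sqrt_ex[OF j1] by blast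
  have sqS: "(Suc i)^2 = i^2 + 2*i + 1" by (simp add: power2_eq_square)
  have N3: "(3*k+1)^2 = (3*k)^2 + 2*(3*k) + 1" by (simp add: power2_eq_square algebra_simps)
  have i3: "i \<le> 3*k"
  proof (rule ccontr)
    assume "\<not> i \<le> 3*k"
    then have "3*k+1 \<le> i" by simp
    then have "(3*k+1)^2 \<le> i^2" by (rule power_mono) simp
    then show False using ij False N3 by linarith
  qed
  note st = start[OF k a i1 i3]
  note bl = block[OF k a i1 i3 st]
  define e where "e = j - i^2"
  have je: "j = i^2 + e" unfolding e_def using ij by simp
  have e2: "e \<le> 2*i" using ji je sqS by linarith
  consider "e < i" | "e = i" | "i < e \<and> e < 2*i" | "e = 2*i" using e2 by linarith
  then show ?thesis
  proof cases
    case 1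
    have "E k j = a*i + e" using bl 1 je by simp
    moreover have "E k (Suc j) = a*i + (e+1)"
    proof -
      have sj: "Suc j = i^2 + (e+1)" using je by simp
      have A: "\<forall>e\<le>i. E k (i^2+e) = a*i+e" using bl by blast
      have "e + 1 \<le> i" using 1 by simp
      with A have h: "E k (i^2+(e+1)) = a*i+(e+1)" by blast
      show ?thesis by (simp only: sj h)
    qed
    ultimately show ?thesis by simp
  next
    case 2
    have "E k j = a*i + i" using bl 2 je by simp
    moreover have "E k (Suc j) = a*i + (3*k+2)"
    proof -
      have "Suc j = i^2 + i + 1 + 0" using je 2 by simp
      moreover have "0 < i" using i1 by simp
      ultimately show ?thesis using bl by (metis add_0_right)
    qed
    moreover have "(i^2+i) mod 3 \<noteq> 0" using jm je 2 by simp
    ultimately show ?thesis using M1[of i k] a by simp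
  next
    case 3
    define d where "d = e - i - 1"
    have ed: "e = i + 1 + d" and di: "d + 1 < i" using 3 unfolding d_def by auto
    have "E k j = a*i+(3*k+2)+d"
    proof -
      have "j = i^2+i+1+d" using je ed by simp
      moreover have "d < i" using di by simp
      ultimately show ?thesis using bl by simp
    qed
    moreover have "E k (Suc j) = a*i+(3*k+2)+(d+1)"
    proof -
      have "Suc j = i^2+i+1+(d+1)" using je ed by simp
      moreover have "d+1 < i" using di by simp
      ultimately show ?thesis using bl by presburger
    qed
    ultimately show ?thesis by simp
  next
    case 4
    have ilt: "i < 3*k"
    proof (rule ccontr)
      assume "\<not> i < 3*k"
      then have "i = 3*k" using i3 by simp
      then show False using False je 4 k by simp
    qed
    have "E k j = a*i+(3*k+2)+(i-1)"
    proof -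
      have sj: "j = i^2+i+1+(i-1)" using je 4 i1 by simp
      have B: "\<forall>d<i. E k (i^2+i+1+d) = a*i+(3*k+2)+d" using bl by blast
      have "i-1 < i" using i1 by simp
      with B have h: "E k (i^2+i+1+(i-1)) = a*i+(3*k+2)+(i-1)" by blast
      show ?thesis by (simp only: sj h)
    qed
    moreover have "E k (Suc j) = a*(i+1)"
    proof -
      have "Suc j = (Suc i)^2" using je 4 sqS by simp
      then show ?thesis using start[OF k a, of "Suc i"] ilt by simp
    qed
    moreover have "(i^2+2*i) mod 3 \<noteq> 0" using jm je 4 by simp
    moreover have "a*i+(3*k+2)+(i-1) + 1 = a*i+3*k+2+i" using i1 by simp
    ultimately show ?thesis using M2[of i k] a by simp
  qed
qed

end

lemma H2_sub: "submonoid_nat (H2 k)"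
  unfolding submonoid_nat_def
proof (intro conjI ballI)
  show "0 \<in> H2 k" by (simp add: memH)
  fix x y assume x: "x \<in> H2 k" and y: "y \<in> H2 k"
  define a where "a = 6*k+1"
  note mH = memH[of _ k, folded a_def]
  show "x + y \<in> H2 k"
  proof (cases "x = 0 \<or> y = 0")
    case True then show ?thesis using x y by auto
  next
    case False
    then obtain i where i: "i \<ge> 1" and xi: "(a*i \<le> x \<and> x \<le> a*i+i) \<or> (a*i+(3*k+2) \<le> x \<and> x < a*i+(3*k+2)+i)"
      using x unfolding mH by blast
    obtain j where j: "j \<ge> 1" and yj: "(a*j \<le> y \<and> y \<le> a*j+j) \<or> (a*j+(3*k+2) \<le> y \<and> y < a*j+(3*k+2)+j)"
      using y False unfolding mH by blast
    have s1: "a*(i+j) = a*i+a*j" by (simp add: algebra_simps)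
    have s2: "a*(i+j+1) = a*i+a*j+a" by (simp add: algebra_simps)
    have ij1: "i+j \<ge> 1" "i+j+1 \<ge> 1" using i by auto
    have "\<exists>l\<ge>1. (a*l \<le> x+y \<and> x+y \<le> a*l+l) \<or> (a*l+(3*k+2) \<le> x+y \<and> x+y < a*l+(3*k+2)+l)"
    proof -
      consider "a*i \<le> x \<and> x \<le> a*i+i" "a*j \<le> y \<and> y \<le> a*j+j"
        | "a*i \<le> x \<and> x \<le> a*i+i" "a*j+(3*k+2) \<le> y \<and> y < a*j+(3*k+2)+j"
        | "a*i+(3*k+2) \<le> x \<and> x < a*i+(3*k+2)+i" "a*j \<le> y \<and> y \<le> a*j+j"
        | "a*i+(3*k+2) \<le> x \<and> x < a*i+(3*k+2)+i" "a*j+(3*k+2) \<le> y \<and> y < a*j+(3*k+2)+j"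
        using xi yj by blast
      then show ?thesis
      proof cases
        case 1
        then have "a*(i+j) \<le> x+y \<and> x+y \<le> a*(i+j)+(i+j)" using s1 by linarith
        then show ?thesis using ij1 by blast
      next
        case 2
        then have "a*(i+j)+(3*k+2) \<le> x+y \<and> x+y < a*(i+j)+(3*k+2)+(i+j)" using s1 by linarith
        then show ?thesis using ij1 by blast
      next
        case 3
        then have "a*(i+j)+(3*k+2) \<le> x+y \<and> x+y < a*(i+j)+(3*k+2)+(i+j)" using s1 by linarith
        then show ?thesis using ij1 by blast
      next
        case 4
        then have "a*(i+j+1) \<le> x+y \<and> x+y \<le> a*(i+j+1)+(i+j+1)" using s2 a_def by linarith
        then show ?thesis using ij1 by blast
      qed
    qed
    then show ?thesis unfolding mH by blast
  qed
qed

lemma mult_in: "submonoid_nat M \<Longrightarrow> x \<in> M \<Longrightarrow> n*x \<in> M"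
  by (induction n) (auto simp: submonoid_nat_def)

lemma H2_le_M:
  assumes M: "submonoid_nat M" and S: "{6*k+1, 6*k+2, 9*k+3} \<subseteq> M"
  shows "H2 k \<subseteq> M"
proof
  fix y assume y: "y \<in> H2 k"
  define a where "a = 6*k+1"
  note mH = memH[of _ k, folded a_def]
  have aM: "a \<in> M" and a1M: "a+1 \<in> M" using S a_def by auto
  have ab: "a+(3*k+2) = 9*k+3" using a_def by simp
  have b9: "9*k+3 \<in> M" using S by blast
  have bM: "a+(3*k+2) \<in> M" unfolding ab by (rule b9)
  have add: "\<And>u v. u \<in> M \<Longrightarrow> v \<in> M \<Longrightarrow> u+v \<in> M" using M unfolding submonoid_nat_def by blast
  show "y \<in> M"
  proof (cases "y = 0")
    case True then show ?thesis using M unfolding submonoid_nat_def by simp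
  next
    case False
    then obtain i where i: "i \<ge> 1" and yi: "(a*i \<le> y \<and> y \<le> a*i+i) \<or> (a*i+(3*k+2) \<le> y \<and> y < a*i+(3*k+2)+i)"
      using y unfolding mH by blast
    from yi show ?thesis
    proof
      assume h: "a*i \<le> y \<and> y \<le> a*i+i"
      define e where "e = y - a*i"
      have e: "y = a*i + e" "e \<le> i" using h unfolding e_def by auto
      then obtain r where r: "i = e + r" using le_Suc_ex by blast
      have "y = r*a + e*(a+1)" using e r by (simp add: algebra_simps)
      then show ?thesis using add mult_in[OF M aM] mult_in[OF M a1M] by simp
    next
      assume h: "a*i+(3*k+2) \<le> y \<and> y < a*i+(3*k+2)+i"
      define d where "d = y - (a*i+(3*k+2))"
      have d: "y = a*i+(3*k+2) + d" "d + 1 \<le> i" using h unfolding d_def by auto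
      then obtain r where r: "i = d + 1 + r" using le_Suc_ex by blast
      have "y = (a+(3*k+2)) + (r*a + d*(a+1))" using d r by (simp add: algebra_simps)
      moreover have "(a+(3*k+2)) + (r*a + d*(a+1)) \<in> M"
        using add[OF bM add[OF mult_in[OF M aM] mult_in[OF M a1M]]] .
      ultimately show ?thesis by simp
    qed
  qed
qed

lemma bij3:
  fixes f :: "nat \<Rightarrow> nat"
  assumes "r < 3" "f 1 = r" "f 2 = (r+1) mod 3" "f 3 = (r+2) mod 3"
  shows "bij_betw f {1..3} {..<3}"
proof -
  have e: "{1..3::nat} = {1,2,3}" by auto
  have l: "{..<3::nat} = {0,1,2}" by auto
  have "r = 0 \<or> r = 1 \<or> r = 2" using assms(1) by auto
  then show ?thesis unfolding bij_betw_def inj_on_def e l using assms(2-4) by auto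
qed

theorem lemma4p2:
  fixes k :: nat and S G :: "nat set"
  assumes "0 < k"
    and "S = {6*k+1, 6*k+2, 9*k+3}"
    and "G = gen_monoid S"
  shows "(submonoid_nat (H2 k) \<and> S \<subseteq> H2 k)
    \<and> (\<forall>i\<in>{1..3*k+1}. \<forall>x\<in>A_set i k. \<forall>y\<in>B_set i k. x < y)
    \<and> (\<forall>i\<in>{1..3*k}. \<forall>x\<in>B_set i k. \<forall>y\<in>A_set (i+1) k. x \<le> y)
    \<and> {(6*k+1)*(3*k)+(3*k+2)..} \<subseteq> H2 k
    \<and> G = H2 k
    \<and> perm_numerical_semigroup 3 (H2 k)"
proof -
  define a where "a = 6*k+1"
  have k: "0 < k" by (rule assms(1))
  have sub: "submonoid_nat (H2 k)" by (rule H2_sub)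
  have h1: "6*k+1 \<in> H2 k" using inA[OF k a_def, of 1 0] a_def by simp
  have h2: "6*k+2 \<in> H2 k" using inA[OF k a_def, of 1 1] a_def by simp
  have h3: "9*k+3 \<in> H2 k"
  proof -
    have eq: "9*k+3 = a*1+(3*k+2)+0" using a_def by simp
    show ?thesis unfolding eq by (rule inB[OF k a_def]) simp_all
  qed
  have SH: "S \<subseteq> H2 k" using assms(2) h1 h2 h3 by blast
  have p2: "\<forall>i\<in>{1..3*k+1}. \<forall>x\<in>A_set i k. \<forall>y\<in>B_set i k. x < y"
  proof (intro ballI)
    fix i x y assume i: "i \<in> {1..3*k+1}" and x: "x \<in> A_set i k" and y: "y \<in> B_set i k"
    define P where "P = (6*k+1)*i"
    have "x \<le> P + i" using x unfolding A_set_def P_def by simp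
    moreover have "P + (3*k+2) \<le> y" using y unfolding B_set_def P_def by simp
    ultimately show "x < y" using i by simp
  qed
  have p3: "\<forall>i\<in>{1..3*k}. \<forall>x\<in>B_set i k. \<forall>y\<in>A_set (i+1) k. x \<le> y"
  proof (intro ballI)
    fix i x y assume i: "i \<in> {1..3*k}" and x: "x \<in> B_set i k" and y: "y \<in> A_set (i+1) k"
    define P where "P = (6*k+1)*i"
    have "x \<le> P + (3*k+2) + i - 1" using x unfolding B_set_def P_def by simp
    moreover have "(6*k+1)*(i+1) = P + (6*k+1)" unfolding P_def by simp
    moreover have "(6*k+1)*(i+1) \<le> y" using y unfolding A_set_def by simp
    ultimately show "x \<le> y" using i by simp
  qed
  have p4: "{(6*k+1)*(3*k)+(3*k+2)..} \<subseteq> H2 k" using tail4[OF k] by blast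
  have GH: "G = H2 k"
  proof
    show "G \<subseteq> H2 k" unfolding assms(3) gen_monoid_def using sub SH by blast
    show "H2 k \<subseteq> G" unfolding assms(3) gen_monoid_def
      using H2_le_M[of _ k] assms(2) by blast
  qed
  have ns: "numerical_semigroup (H2 k)"
  proof -
    have "UNIV - H2 k \<subseteq> {..<(6*k+1)*(3*k)+(3*k+2)}" using p4 by (auto simp: not_le[symmetric])
    then have "finite (UNIV - H2 k)" using finite_subset by blast
    then show ?thesis unfolding numerical_semigroup_def using sub by blast
  qed
  have st1: "E k (1^2) = a*1" using start[OF k a_def, of 1] k by simp
  note bl1 = block[OF k a_def _ _ st1]
  have E2: "E k 2 = a+1"
  proof -
    have "\<forall>e\<le>1. E k (1^2+e) = a*1+e" using bl1 k by simp
    then have "E k (1^2+1) = a*1+1" by blast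
    then show ?thesis by (simp add: numeral_2_eq_2)
  qed
  have E3: "E k 3 = a+(3*k+2)"
  proof -
    have "\<forall>d<1. E k (1^2+1+1+d) = a*1+(3*k+2)+d" using bl1 k by simp
    then have "E k (1^2+1+1+0) = a*1+(3*k+2)+0" by blast
    then show ?thesis by (simp add: numeral_3_eq_3)
  qed
  have img: "(\<lambda>j. enumerate (H2 k) j) ` {1..3} = S"
  proof -
    have e: "{1..3::nat} = {1,2,3}" by auto
    have q1: "a+(3*k+2) = 9*k+3" "a+1 = 6*k+2" using a_def by simp_all
    have F1: "E k 1 = 6*k+1" using E1[OF k a_def] a_def by simp
    have F2: "E k 2 = 6*k+2" using E2 q1 by simp
    have F3: "E k 3 = 9*k+3" using E3 q1 by (simp only:)
    show ?thesis unfolding e assms(2) by (simp only: image_insert image_empty F1 F2 F3)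
  qed
  have bij: "\<forall>m. bij_betw (\<lambda>j. enumerate (H2 k) (m * 3 + j) mod 3) {1..3} {..<3}"
  proof
    fix m
    define X where "X = E k (m*3+1)"
    have s1: "E k (Suc (m*3+1)) mod 3 = (X + 1) mod 3"
      unfolding X_def by (rule stepmod[OF k a_def]) presburger
    have s2: "E k (Suc (m*3+2)) mod 3 = (E k (m*3+2) + 1) mod 3"
      by (rule stepmod[OF k a_def]) presburger
    have g1: "\<forall>Y::nat. (Y+1) mod 3 = (Y mod 3 + 1) mod 3" by presburger
    have g2: "\<forall>Y::nat. ((Y + 1) mod 3 + 1) mod 3 = (Y + 2) mod 3" by presburger
    have i2: "Suc (m*3+1) = m*3+2" by simp
    have i3: "Suc (m*3+2) = m*3+3" by simp
    have f2a: "E k (m*3+2) mod 3 = (X + 1) mod 3" using s1 by (simp only: i2)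
    have f2: "E k (m*3+2) mod 3 = (X mod 3 + 1) mod 3" using f2a g1 by simp
    have "E k (m*3+3) mod 3 = (E k (m*3+2) + 1) mod 3" using s2 by (simp only: i3)
    also have "\<dots> = (E k (m*3+2) mod 3 + 1) mod 3" using g1 by blast
    also have "\<dots> = ((X mod 3 + 1) mod 3 + 1) mod 3" using f2 by simp
    also have "\<dots> = (X mod 3 + 2) mod 3" using g2 by blast
    finally have f3: "E k (m*3+3) mod 3 = (X mod 3 + 2) mod 3" .
    show "bij_betw (\<lambda>j. enumerate (H2 k) (m * 3 + j) mod 3) {1..3} {..<3}"
    proof (rule bij3[of "X mod 3"])
      show "X mod 3 < 3" by simp
      show "(\<lambda>j. enumerate (H2 k) (m * 3 + j) mod 3) 1 = X mod 3" unfolding X_def by simp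
      show "(\<lambda>j. enumerate (H2 k) (m * 3 + j) mod 3) 2 = (X mod 3 + 1) mod 3" using f2 by (simp only:)
      show "(\<lambda>j. enumerate (H2 k) (m * 3 + j) mod 3) 3 = (X mod 3 + 2) mod 3" using f3 by (simp only:)
    qed
  qed
  have perm: "perm_numerical_semigroup 3 (H2 k)"
    unfolding perm_numerical_semigroup_def using ns img GH assms(3) bij by simp
  show ?thesis using sub SH p2 p3 p4 GH perm by blast
qed

end
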